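(* Consider $p\ge 1$ machines, machine $v$ having nonnegative real parameters $k^A_v,k^B_v,t^A_v,t^B_v$, and a real bound $L$. For $1\le v\le p$ and an integer $a\ge 0$, let $b_v(a)=\{b\in\mathbb{Z}_{\ge 0} : f_v(a,b)\le L\}$ and $$dp(v,a)=\bigcup_{\substack{x_1+\dots+x_v=a\\ x_1,\dots,x_v\in\mathbb{Z}_{\ge 0}}}\big(b_1(x_1)+\dots+b_v(x_v)\big),$$ where $+$ denotes the sumset $X+Y=\{x+y : x\in X, y\in Y\}$. Then for every $1\le v\le p$ and every integer $a\ge 0$: (1) if $dp(v,a)=\emptyset$, then $dp(v,a+\delta)=\emptyset$ for every integer $\delta>0$; (2) if $dp(v,a)\neq\emptyset$ and $dp(v,a+1)\neq\emptyset$, then at least one of the following holds: (i) $dp(v,a)\cap dp(v,a+1)\neq\emptyset$; (ii) there exists $b_0\in dp(v,a)$ with $b_0+1\in dp(v,a+1)$.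
   Context: Each machine $v$ processes jobs of two types, A and B, in batches. A schedule of machine $v$ for the task-combination $(a,b)$ is a finite sequence of batches, each a nonempty group of jobs of a single type, with consecutive batches of different types, processing exactly $a$ A-jobs and $b$ B-jobs. An A-batch of $x$ jobs takes $t^A_v+k^A_v x^2$ time units and a B-batch of $x$ jobs takes $t^B_v+k^B_v x^2$ time units on machine $v$; the time of a schedule is the sum of its batch times (empty schedule: time $0$). $f_v(a,b)$ is the minimum time over all schedules of machine $v$ for $(a,b)$. *)

theory Defs
  imports Complex_Main
begin

datatype jobtype = JA | JB

type_synonym batch = "jobtype \<times> nat"

definition is_schedule :: "nat \<Rightarrow> nat \<Rightarrow> batch list \<Rightarrow> bool" where
  "is_schedule a b s \<longleftrightarrow>
     (\<forall>bt\<in>set s. snd bt > 0) \<and>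
     (\<forall>i. Suc i < length s \<longrightarrow> fst (s ! i) \<noteq> fst (s ! Suc i)) \<and>
     sum_list (map snd (filter (\<lambda>bt. fst bt = JA) s)) = a \<and>
     sum_list (map snd (filter (\<lambda>bt. fst bt = JB) s)) = b"

fun batch_time :: "(nat \<Rightarrow> real) \<Rightarrow> (nat \<Rightarrow> real) \<Rightarrow> (nat \<Rightarrow> real) \<Rightarrow> (nat \<Rightarrow> real)
                   \<Rightarrow> nat \<Rightarrow> batch \<Rightarrow> real" where
  "batch_time kA kB tA tB v (JA, x) = tA v + kA v * real x ^ 2"
| "batch_time kA kB tA tB v (JB, x) = tB v + kB v * real x ^ 2"

definition sched_time :: "(nat \<Rightarrow> real) \<Rightarrow> (nat \<Rightarrow> real) \<Rightarrow> (nat \<Rightarrow> real) \<Rightarrow> (nat \<Rightarrow> real)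
                   \<Rightarrow> nat \<Rightarrow> batch list \<Rightarrow> real" where
  "sched_time kA kB tA tB v s = sum_list (map (batch_time kA kB tA tB v) s)"

definition fv :: "(nat \<Rightarrow> real) \<Rightarrow> (nat \<Rightarrow> real) \<Rightarrow> (nat \<Rightarrow> real) \<Rightarrow> (nat \<Rightarrow> real)
                   \<Rightarrow> nat \<Rightarrow> nat \<Rightarrow> nat \<Rightarrow> real" where
  "fv kA kB tA tB v a b = Min {sched_time kA kB tA tB v s | s. is_schedule a b s}"

definition bset :: "(nat \<Rightarrow> real) \<Rightarrow> (nat \<Rightarrow> real) \<Rightarrow> (nat \<Rightarrow> real) \<Rightarrow> (nat \<Rightarrow> real)
                   \<Rightarrow> real \<Rightarrow> nat \<Rightarrow> nat \<Rightarrow> nat set" where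
  "bset kA kB tA tB L v a = {b. fv kA kB tA tB v a b \<le> L}"

definition dp :: "(nat \<Rightarrow> real) \<Rightarrow> (nat \<Rightarrow> real) \<Rightarrow> (nat \<Rightarrow> real) \<Rightarrow> (nat \<Rightarrow> real)
                   \<Rightarrow> real \<Rightarrow> nat \<Rightarrow> nat \<Rightarrow> nat set" where
  "dp kA kB tA tB L v a =
     {c. \<exists>x y. (\<Sum>i\<in>{1..v}. x i) = a \<and>
              (\<forall>i\<in>{1..v}. y i \<in> bset kA kB tA tB L i (x i)) \<and>
              c = (\<Sum>i\<in>{1..v}. y i)}"

end

theory Submission
  imports Defs
begin

definition alt :: "batch list \<Rightarrow> bool" where
  "alt s \<longleftrightarrow> (\<forall>i. Suc i < length s \<longrightarrow> fst (s ! i) \<noteq> fst (s ! Suc i))"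

lemma is_schedule_alt: "is_schedule a b s \<longleftrightarrow>
     (\<forall>bt\<in>set s. snd bt > 0) \<and> alt s \<and>
     sum_list (map snd (filter (\<lambda>bt. fst bt = JA) s)) = a \<and>
     sum_list (map snd (filter (\<lambda>bt. fst bt = JB) s)) = b"
  unfolding is_schedule_def alt_def by simp

lemma alt_fst: assumes "map fst s = map fst s'" "alt s" shows "alt s'"
proof -
  have l: "length s = length s'" using assms(1) by (metis length_map)
  have "\<And>i. i < length s \<Longrightarrow> fst (s ! i) = fst (s' ! i)"
    using assms(1) l by (metis nth_map)
  then show ?thesis using assms(2) l unfolding alt_def by (metis Suc_lessD)
qed

lemma alt_take: "alt s \<Longrightarrow> alt (take n s)"
  unfolding alt_def by auto

lemma sum_split: "sum_list (map snd (filter (\<lambda>bt. fst bt = JA) (s::batch list))) +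
   sum_list (map snd (filter (\<lambda>bt. fst bt = JB) s)) = sum_list (map snd s)"
proof (induction s)
  case Nil then show ?case by simp
next
  case (Cons bt s)
  obtain t n where bt: "bt = (t, n)" by force
  show ?case
  proof (cases t)
    case JA then show ?thesis using Cons.IH bt by (simp add: add.assoc)
  next
    case JB
    then have "sum_list (map snd (filter (\<lambda>bt. fst bt = JA) (bt # s))) +
      sum_list (map snd (filter (\<lambda>bt. fst bt = JB) (bt # s))) =
      sum_list (map snd (filter (\<lambda>bt. fst bt = JA) s)) + (n +
      sum_list (map snd (filter (\<lambda>bt. fst bt = JB) s)))" using bt by simp
    also have "\<dots> = n + sum_list (map snd s)" using Cons.IH by linarith
    finally show ?thesis using bt by simp
  qed
qed

lemma len_le: "\<forall>bt\<in>set s. snd bt > (0::nat) \<Longrightarrow> length s \<le> sum_list (map snd s)"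
  by (induction s) auto

lemma elem_le: "bt \<in> set (s :: batch list) \<Longrightarrow> snd bt \<le> sum_list (map snd s)"
  by (induction s) (auto simp: add_increasing add_increasing2)

lemma sched_finite: "finite {s. is_schedule a b s}"
proof -
  have "{s. is_schedule a b s} \<subseteq> {xs. set xs \<subseteq> {JA,JB} \<times> {0..a+b} \<and> length xs \<le> a+b}"
  proof
    fix s assume "s \<in> {s. is_schedule a b s}"
    then have h: "is_schedule a b s" by simp
    have sm: "sum_list (map snd s) = a + b" using h sum_split[of s] unfolding is_schedule_def by simp
    have "length s \<le> a + b" using h len_le[of s] sm unfolding is_schedule_def by simp
    moreover have "set s \<subseteq> {JA,JB} \<times> {0..a+b}"
    proof
      fix bt assume "bt \<in> set s"
      then have "snd bt \<le> a + b" using elem_le sm by metis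
      then show "bt \<in> {JA,JB} \<times> {0..a+b}" by (cases bt; cases "fst bt") auto
    qed
    ultimately show "s \<in> {xs. set xs \<subseteq> {JA,JB} \<times> {0..a+b} \<and> length xs \<le> a+b}" by simp
  qed
  moreover have "finite {xs. set xs \<subseteq> {JA,JB} \<times> {0..a+b} \<and> length xs \<le> a+b}"
    by (rule finite_lists_length_le) simp
  ultimately show ?thesis by (rule finite_subset)
qed

lemma sched_exists: "\<exists>s. is_schedule a b s"
proof -
  define s where "s = (if a > 0 then [(JA,a)] else []) @ (if b > 0 then [(JB,b)] else [])"
  have "is_schedule a b s" unfolding s_def is_schedule_def
    by (auto simp: nth_Cons split: nat.splits)
  then show ?thesis by blast
qed

lemma fv_le: "is_schedule a b s \<Longrightarrow> fv kA kB tA tB v a b \<le> sched_time kA kB tA tB v s"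
  unfolding fv_def
  by (rule Min_le) (use sched_finite[of a b] in \<open>auto simp: setcompr_eq_image\<close>)

lemma fv_attained: "\<exists>s. is_schedule a b s \<and> sched_time kA kB tA tB v s = fv kA kB tA tB v a b"
proof -
  have fin: "finite {sched_time kA kB tA tB v s | s. is_schedule a b s}"
    using sched_finite[of a b] by (simp add: setcompr_eq_image)
  have ne: "{sched_time kA kB tA tB v s | s. is_schedule a b s} \<noteq> {}"
    using sched_exists[of a b] by auto
  have "fv kA kB tA tB v a b \<in> {sched_time kA kB tA tB v s | s. is_schedule a b s}"
    unfolding fv_def using Min_in[OF fin ne] .
  then show ?thesis by auto
qed

lemma bt_nonneg: assumes "kA v \<ge> 0" "kB v \<ge> 0" "tA v \<ge> 0" "tB v \<ge> 0"
  shows "batch_time kA kB tA tB v bt \<ge> 0"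
  using assms by (cases bt; cases "fst bt") auto

lemma sched_time_append: "sched_time kA kB tA tB v (xs @ ys) =
   sched_time kA kB tA tB v xs + sched_time kA kB tA tB v ys"
  unfolding sched_time_def by simp

lemma sched_time_nonneg: assumes "kA v \<ge> 0" "kB v \<ge> 0" "tA v \<ge> 0" "tB v \<ge> 0"
  shows "sched_time kA kB tA tB v s \<ge> 0"
  unfolding sched_time_def
  by (induction s) (auto intro!: add_nonneg_nonneg bt_nonneg[where kA=kA and kB=kB and tA=tA and tB=tB and v=v, OF assms])

lemma truncate:
  assumes nn: "kA v \<ge> 0" "kB v \<ge> 0" "tA v \<ge> 0" "tB v \<ge> 0"
    and h: "is_schedule (Suc x) b s"
  shows "\<exists>c s1 s2. is_schedule (Suc x) c s1 \<and> is_schedule x c s2 \<and>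
     sched_time kA kB tA tB v s1 \<le> sched_time kA kB tA tB v s \<and>
     sched_time kA kB tA tB v s2 \<le> sched_time kA kB tA tB v s"
proof -
  let ?T = "sched_time kA kB tA tB v"
  have pos: "\<forall>bt\<in>set s. snd bt > 0" and al: "alt s"
    and ca: "sum_list (map snd (filter (\<lambda>bt. fst bt = JA) s)) = Suc x"
    using h unfolding is_schedule_alt by auto
  have "\<exists>bt\<in>set s. fst bt = JA"
  proof (rule ccontr)
    assume "\<not> ?thesis"
    then have "filter (\<lambda>bt. fst bt = JA) s = []" by (simp add: filter_empty_conv)
    then show False using ca by simp
  qed
  then obtain P bt R where s: "s = P @ bt # R" and btA: "fst bt = JA" and R: "\<forall>z\<in>set R. fst z \<noteq> JA"
    using split_list_last_propE[of s "\<lambda>bt. fst bt = JA"] by metis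
  obtain m where bt: "bt = (JA, m)" using btA by (cases bt) auto
  have m: "m > 0" using pos s bt by auto
  have fR: "filter (\<lambda>bt. fst bt = JA) R = []" using R by (simp add: filter_empty_conv)
  have aP: "sum_list (map snd (filter (\<lambda>bt. fst bt = JA) P)) + m = Suc x"
    using ca s bt fR by simp
  define c where "c = sum_list (map snd (filter (\<lambda>bt. fst bt = JB) P))"
  define s1 where "s1 = P @ [(JA, m)]"
  have s1t: "s1 = take (Suc (length P)) s" unfolding s1_def s bt by simp
  have "is_schedule (Suc x) c s1"
    unfolding is_schedule_alt
  proof (intro conjI)
    show "\<forall>bt\<in>set s1. 0 < snd bt" using pos s1t by (meson in_set_takeD)
    show "alt s1" using alt_take[OF al] s1t by simp
  qed (use aP c_def s1_def in auto)
  moreover have "?T s1 \<le> ?T s"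
    using sched_time_nonneg[where kA=kA and kB=kB and tA=tA and tB=tB and v=v, OF nn, of R] unfolding s1_def s bt
    by (simp add: sched_time_append sched_time_def)
  moreover have "\<exists>s2. is_schedule x c s2 \<and> ?T s2 \<le> ?T s"
  proof (cases "m = 1")
    case True
    have "is_schedule x c P"
      unfolding is_schedule_alt
    proof (intro conjI)
      show "\<forall>bt\<in>set P. 0 < snd bt" using pos s by auto
      show "alt P" using alt_take[OF al, of "length P"] s by simp
    qed (use aP c_def True in auto)
    moreover have "?T P \<le> ?T s"
      using sched_time_nonneg[where kA=kA and kB=kB and tA=tA and tB=tB and v=v, OF nn, of "bt # R"] unfolding s
      by (simp add: sched_time_append)
    ultimately show ?thesis by blast
  next
    case False
    define s2 where "s2 = P @ [(JA, m - 1)]"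
    have "is_schedule x c s2"
      unfolding is_schedule_alt
    proof (intro conjI)
      show "\<forall>bt\<in>set s2. 0 < snd bt" using pos s m False unfolding s2_def by auto
      have "alt s1" using alt_take[OF al] s1t by simp
      moreover have "map fst s1 = map fst s2" by (simp add: s1_def s2_def)
      ultimately show "alt s2" using alt_fst by blast
    qed (use aP c_def m s2_def in auto)
    moreover have "?T s2 \<le> ?T s1"
    proof -
      have "real (m - 1) ^ 2 \<le> real m ^ 2" by (simp add: power_mono)
      then have "kA v * real (m - 1) ^ 2 \<le> kA v * real m ^ 2" using nn(1) by (rule mult_left_mono)
      then show ?thesis unfolding s1_def s2_def by (simp add: sched_time_append sched_time_def)
    qed
    ultimately show ?thesis using \<open>?T s1 \<le> ?T s\<close> by force
  qed
  ultimately show ?thesis by blast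
qed

lemma key:
  assumes nn: "kA v \<ge> 0" "kB v \<ge> 0" "tA v \<ge> 0" "tB v \<ge> 0"
    and b: "b \<in> bset kA kB tA tB L v (Suc x)"
  shows "\<exists>c. c \<in> bset kA kB tA tB L v (Suc x) \<and> c \<in> bset kA kB tA tB L v x"
proof -
  obtain s where s: "is_schedule (Suc x) b s" "sched_time kA kB tA tB v s = fv kA kB tA tB v (Suc x) b"
    using fv_attained by blast
  have L: "sched_time kA kB tA tB v s \<le> L" using b s(2) unfolding bset_def by simp
  obtain c s1 s2 where "is_schedule (Suc x) c s1" "is_schedule x c s2"
     "sched_time kA kB tA tB v s1 \<le> sched_time kA kB tA tB v s"
     "sched_time kA kB tA tB v s2 \<le> sched_time kA kB tA tB v s"
    using truncate[where kA=kA and kB=kB and tA=tA and tB=tB and v=v, OF nn s(1)] by blast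
  then show ?thesis unfolding bset_def using L fv_le
    by (metis (no_types, lifting) mem_Collect_eq order_trans)
qed

lemma sum_upd: fixes j v :: nat assumes "j \<in> {1..v}"
  shows "(\<Sum>i\<in>{1..v}. (f(j := t)) i) + f j = (\<Sum>i\<in>{1..v}. f i) + (t::nat)"
proof -
  have e1: "sum (f(j := t)) {1..v} = (f(j := t)) j + sum (f(j := t)) ({1..v} - {j})"
    by (rule sum.remove) (use assms in auto)
  have e2: "sum f {1..v} = f j + sum f ({1..v} - {j})"
    by (rule sum.remove) (use assms in auto)
  have e3: "sum (f(j := t)) ({1..v} - {j}) = sum f ({1..v} - {j})"
    by (rule sum.cong) auto
  show ?thesis using e1 e2 e3 by simp
qed

lemma dp_step:
  assumes nn: "\<forall>i\<in>{1..v}. kA i \<ge> 0 \<and> kB i \<ge> 0 \<and> tA i \<ge> 0 \<and> tB i \<ge> 0"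
    and ne: "dp kA kB tA tB L v (Suc a) \<noteq> {}"
  shows "dp kA kB tA tB L v a \<inter> dp kA kB tA tB L v (Suc a) \<noteq> {}"
proof -
  obtain x y where x: "(\<Sum>i\<in>{1..v}. x i) = Suc a"
    and y: "\<forall>i\<in>{1..v}. y i \<in> bset kA kB tA tB L i (x i)"
    using ne unfolding dp_def by blast
  have "\<exists>j\<in>{1..v}. x j > 0"
  proof (rule ccontr)
    assume "\<not> ?thesis"
    then have "\<forall>i\<in>{1..v}. x i = 0" by auto
    then show False using x by simp
  qed
  then obtain j where j: "j \<in> {1..v}" "x j > 0" by blast
  obtain x0 where x0: "x j = Suc x0" using j(2) gr0_implies_Suc by blast
  obtain c where c: "c \<in> bset kA kB tA tB L j (Suc x0)" "c \<in> bset kA kB tA tB L j x0"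
  proof -
    have "y j \<in> bset kA kB tA tB L j (Suc x0)" using y j(1) x0 by force
    moreover have "kA j \<ge> 0 \<and> kB j \<ge> 0 \<and> tA j \<ge> 0 \<and> tB j \<ge> 0" using nn j(1) by blast
    ultimately show ?thesis using key[of kA j kB tA tB "y j" L x0] that by blast
  qed
  define y' where "y' = y(j := c)"
  define x' where "x' = x(j := x0)"
  have "(\<Sum>i\<in>{1..v}. x' i) = a"
    using sum_upd[OF j(1), of x x0] x x0 unfolding x'_def by simp
  moreover have "\<forall>i\<in>{1..v}. y' i \<in> bset kA kB tA tB L i (x' i)"
    using y c unfolding x'_def y'_def by auto
  ultimately have "sum y' {1..v} \<in> dp kA kB tA tB L v a" unfolding dp_def by blast
  moreover have "\<forall>i\<in>{1..v}. y' i \<in> bset kA kB tA tB L i (x i)"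
    using y c x0 unfolding y'_def by auto
  then have "sum y' {1..v} \<in> dp kA kB tA tB L v (Suc a)" unfolding dp_def using x by blast
  ultimately show ?thesis by blast
qed

lemma dp_down:
  assumes nn: "\<forall>i\<in>{1..v}. kA i \<ge> 0 \<and> kB i \<ge> 0 \<and> tA i \<ge> 0 \<and> tB i \<ge> 0"
  shows "dp kA kB tA tB L v (a + d) \<noteq> {} \<Longrightarrow> dp kA kB tA tB L v a \<noteq> {}"
proof (induction d)
  case 0 then show ?case by simp
next
  case (Suc d)
  then show ?case using dp_step[OF nn, of L "a + d"] by auto
qed

theorem lemma5:
  fixes p :: nat and kA kB tA tB :: "nat \<Rightarrow> real" and L :: real
  assumes "p \<ge> 1"
    and "\<forall>v\<in>{1..p}. kA v \<ge> 0 \<and> kB v \<ge> 0 \<and> tA v \<ge> 0 \<and> tB v \<ge> 0"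
  shows "\<forall>v\<in>{1..p}. \<forall>a::nat.
     (dp kA kB tA tB L v a = {} \<longrightarrow> (\<forall>\<delta>::nat. \<delta> > 0 \<longrightarrow> dp kA kB tA tB L v (a + \<delta>) = {})) \<and>
     (dp kA kB tA tB L v a \<noteq> {} \<and> dp kA kB tA tB L v (a + 1) \<noteq> {} \<longrightarrow>
        (dp kA kB tA tB L v a \<inter> dp kA kB tA tB L v (a + 1) \<noteq> {} \<or>
         (\<exists>b0\<in>dp kA kB tA tB L v a. b0 + 1 \<in> dp kA kB tA tB L v (a + 1))))"
proof (intro ballI allI conjI impI)
  fix v a assume v: "v \<in> {1..p}"
  have nn: "\<forall>i\<in>{1..v}. kA i \<ge> 0 \<and> kB i \<ge> 0 \<and> tA i \<ge> 0 \<and> tB i \<ge> 0"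
    using assms(2) v by auto
  show "dp kA kB tA tB L v (a + d) = {}" if "dp kA kB tA tB L v a = {}" "0 < d" for d
    using dp_down[OF nn, of L a d] that by blast
  show "dp kA kB tA tB L v a \<inter> dp kA kB tA tB L v (a + 1) \<noteq> {} \<or>
         (\<exists>b0\<in>dp kA kB tA tB L v a. b0 + 1 \<in> dp kA kB tA tB L v (a + 1))"
    if "dp kA kB tA tB L v a \<noteq> {} \<and> dp kA kB tA tB L v (a + 1) \<noteq> {}"
    using dp_step[OF nn, of L a] that by simp
qed

end
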